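(* Let $w=w_1\cdots w_n$ be a word of length $n\ge 2$ in which some letter $\mathrm{A}$ appears exactly $k$ times. Then $f(w)\ge 2k+1$. Further, if $w_i=w_{n-i+1}$ for every $i$ with $w_i=\mathrm{A}$, then $f(w)\ge 2k+2$.
   Context: A word of length $n$ is a sequence $w=w_1w_2\cdots w_n$ of letters (symbols). Let $[n]=\{1,\dots,n\}$. An $n$-grid is a function $G:[n]^2\to\Sigma$, where $\Sigma$ is an arbitrary set of letters. The $i$th row of $G$ contains $w$ if $G(i,j)=w_j$ for all $1\le j\le n$, or $G(i,j)=w_{n-j+1}$ for all $1\le j\le n$. The $j$th column contains $w$ if $G(i,j)=w_i$ for all $i$, or $G(i,j)=w_{n-i+1}$ for all $i$. The main diagonal contains $w$ if $G(i,i)=w_i$ for all $i$ or $G(i,i)=w_{n-i+1}$ for all $i$; the anti-diagonal contains $w$ if $G(i,n-i+1)=w_i$ for all $i$ or $G(i,n-i+1)=w_{n-i+1}$ for all $i$. Let $f(w,G)$ be the number of the $2n+2$ lines ($n$ rows, $n$ columns, $2$ diagonals) of $G$ that contain $w$, and $f(w)=\max_G f(w,G)$ over all $n$-grids $G$. *)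

theory Defs
  imports Main
begin

(* Words are lists; letter w_i (1-based) is  w ! (i - 1).
   An n-grid is a function G :: nat => nat => 'a, only its values on [n]^2 matter. *)

definition letter :: "'a list \<Rightarrow> nat \<Rightarrow> 'a" where
  "letter w i = w ! (i - 1)"

datatype line = Row nat | Col nat | Diag | Anti

definition lines :: "nat \<Rightarrow> line set" where
  "lines n = Row ` {1..n} \<union> Col ` {1..n} \<union> {Diag, Anti}"

fun contains :: "'a list \<Rightarrow> (nat \<Rightarrow> nat \<Rightarrow> 'a) \<Rightarrow> line \<Rightarrow> bool" where
  "contains w G (Row i) =
     ((\<forall>j\<in>{1..length w}. G i j = letter w j) \<or>
      (\<forall>j\<in>{1..length w}. G i j = letter w (length w - j + 1)))"
| "contains w G (Col j) =
     ((\<forall>i\<in>{1..length w}. G i j = letter w i) \<or>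
      (\<forall>i\<in>{1..length w}. G i j = letter w (length w - i + 1)))"
| "contains w G Diag =
     ((\<forall>i\<in>{1..length w}. G i i = letter w i) \<or>
      (\<forall>i\<in>{1..length w}. G i i = letter w (length w - i + 1)))"
| "contains w G Anti =
     ((\<forall>i\<in>{1..length w}. G i (length w - i + 1) = letter w i) \<or>
      (\<forall>i\<in>{1..length w}. G i (length w - i + 1) = letter w (length w - i + 1)))"

definition fwG :: "'a list \<Rightarrow> (nat \<Rightarrow> nat \<Rightarrow> 'a) \<Rightarrow> nat" where
  "fwG w G = card {L \<in> lines (length w). contains w G L}"

definition fw :: "'a list \<Rightarrow> nat" where
  "fw w = Max (range (fwG w))"

end

theory Submission
  imports Defs
begin

lemma fw_ge: "fwG w G \<le> fw w"
proof -
  have fin: "finite (lines (length w))" by (simp add: lines_def)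
  have "fwG w G' \<le> card (lines (length w))" for G'
    unfolding fwG_def by (rule card_mono[OF fin]) auto
  hence "range (fwG w) \<subseteq> {0..card (lines (length w))}" by auto
  hence "finite (range (fwG w))" using finite_subset by blast
  thus ?thesis unfolding fw_def by (simp add: Max_ge)
qed

lemma card_lines_sub:
  assumes "X \<subseteq> {L \<in> lines (length w). contains w G L}"
  shows "card X \<le> fw w"
proof -
  have "finite (lines (length w))" by (simp add: lines_def)
  hence "card X \<le> fwG w G" unfolding fwG_def using assms
    by (intro card_mono) auto
  thus ?thesis using fw_ge[of w G] by linarith
qed

theorem lemma9:
  fixes w :: "'a list" and A :: 'a and k n :: nat
  assumes "length w = n" and "n \<ge> 2"
    and "card {i \<in> {1..n}. letter w i = A} = k"
  shows "fw w \<ge> 2 * k + 1 \<and>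
         ((\<forall>i\<in>{1..n}. letter w i = A \<longrightarrow> letter w i = letter w (n - i + 1))
           \<longrightarrow> fw w \<ge> 2 * k + 2)"
proof -
  define S where "S = {i \<in> {1..n}. letter w i = A}"
  define G where "G = (\<lambda>i j. if letter w i = A then letter w j else letter w i)"
  have finS: "finite S" unfolding S_def by simp
  have cS: "card S = k" using assms(3) S_def by simp
  have rows: "contains w G (Row i)" if "i \<in> S" for i
    using that assms(1) unfolding S_def G_def by auto
  have cols: "contains w G (Col i)" if "i \<in> S" for i
    using that assms(1) unfolding S_def G_def by auto
  have diag: "contains w G Diag" unfolding G_def by auto
  have inl: "Row ` S \<subseteq> lines n" "Col ` S \<subseteq> lines n" "Diag \<in> lines n" "Anti \<in> lines n"
    unfolding lines_def S_def by auto
  have cX: "card (insert Diag (Row ` S \<union> Col ` S)) = 2 * k + 1"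
  proof -
    have "card (Row ` S \<union> Col ` S) = card (Row ` S) + card (Col ` S)"
      using finS by (intro card_Un_disjoint) auto
    also have "\<dots> = 2 * k" using cS by (simp add: card_image inj_on_def)
    moreover have "Diag \<notin> Row ` S \<union> Col ` S" by auto
    ultimately show ?thesis using finS by simp
  qed
  have p1: "2 * k + 1 \<le> fw w"
  proof -
    have "insert Diag (Row ` S \<union> Col ` S) \<subseteq> {L \<in> lines (length w). contains w G L}"
      using rows cols diag inl assms(1) by blast
    from card_lines_sub[OF this] show ?thesis using cX by simp
  qed
  have p2: "2 * k + 2 \<le> fw w"
    if sym: "\<forall>i\<in>{1..n}. letter w i = A \<longrightarrow> letter w i = letter w (n - i + 1)"
  proof -
    have anti: "contains w G Anti"
      using sym assms(1) unfolding G_def by auto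
    have "card (insert Anti (insert Diag (Row ` S \<union> Col ` S))) = 2 * k + 2"
    proof -
      have "Anti \<notin> insert Diag (Row ` S \<union> Col ` S)" by auto
      moreover have "finite (insert Diag (Row ` S \<union> Col ` S))" using finS by simp
      ultimately show ?thesis using cX by simp
    qed
    then have cY: "card (insert Anti (insert Diag (Row ` S \<union> Col ` S))) = 2 * k + 2" .
    show ?thesis
    proof -
      have "insert Anti (insert Diag (Row ` S \<union> Col ` S)) \<subseteq> {L \<in> lines (length w). contains w G L}"
        using rows cols diag anti inl assms(1) by blast
      from card_lines_sub[OF this] show ?thesis using cY by simp
    qed
  qed
  show ?thesis using p1 p2 by blast
qed

end
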